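(* Let $\mathcal{F}=\bigcup_{d=1}^D\mathcal{F}^{(d)}$ be a trans-dimensional family stable by conditioning, whose members have everywhere-positive densities on $\mathbb{R}^d$. Then its meta family $\mathrm{Meta}(\mathcal{F})=\bigcup_{d=1}^D\mathrm{Meta}(\mathcal{F}^{(d)})$ is stable by conditioning: if $\mathbf{X}$ has cdf $C_\theta(F_1(x_1),\dots,F_d(x_d))$ with $\theta\in\Theta^{(d)}$ and $F_1,\dots,F_d$ absolutely continuous strictly increasing cdfs with positive densities, then for all disjoint strictly increasing index tuples $\mathbf{i}$ (length $\ell\ge1$), $\mathbf{j}$ (length $m\ge1$), $\ell+m\le d$, and every conditioning value $\mathbf{x}_{\mathbf{j}}$, the conditional distribution of $\mathbf{X}_{\mathbf{i}}$ given $\mathbf{X}_{\mathbf{j}}=\mathbf{x}_{\mathbf{j}}$ belongs to $\mathrm{Meta}(\mathcal{F}^{(\ell)})$.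
   Context: For each $d$, $\mathcal{F}^{(d)}=\{F_\theta:\theta\in\Theta^{(d)}\}$ is a parametric family of distributions on $\mathbb{R}^d$ with everywhere-positive densities (hence continuous strictly increasing univariate margins), and $C_\theta$ denotes the (unique, by Sklar's theorem) copula of $F_\theta$, i.e. $C_\theta(u_1,\dots,u_d)=F_\theta(\Psi_{1,\theta}^{-1}(u_1),\dots,\Psi_{d,\theta}^{-1}(u_d))$ with $\Psi_{i,\theta}$ the $i$-th marginal cdf of $F_\theta$. The meta family is $\mathrm{Meta}(\mathcal{F}^{(d)})=\{C_\theta\circ(F_1,\dots,F_d):\theta\in\Theta^{(d)},\ F_1,\dots,F_d$ absolutely continuous strictly increasing cdfs on $\mathbb{R}\}$. $\mathcal{F}$ is stable by conditioning if for every $d$, $\theta\in\Theta^{(d)}$, disjoint strictly increasing $\mathbf{i},\mathbf{j}$ of lengths $\ell,m\ge1$ with $\ell+m\le d$ and every conditioning value $\mathbf{z}_{\mathbf{j}}\in\mathbb{R}^m$, the conditional law of the $\mathbf{i}$-coordinates given the $\mathbf{j}$-coordinates equal to $\mathbf{z}_{\mathbf{j}}$ under $F_\theta$ belongs to $\mathcal{F}^{(\ell)}$. *)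

theory Defs
  imports "HOL-Probability.Probability"
begin

text \<open>Euclidean space R^d, points are functions nat => real, extensional on {..<d}.\<close>
definition Rn :: "nat \<Rightarrow> (nat \<Rightarrow> real) measure" where
  "Rn d = PiM {..<d} (\<lambda>_. lborel)"

definition distr_on :: "nat \<Rightarrow> (nat \<Rightarrow> real) measure \<Rightarrow> bool" where
  "distr_on d M \<longleftrightarrow> prob_space M \<and> sets M = sets (Rn d)"

definition has_pos_density :: "nat \<Rightarrow> (nat \<Rightarrow> real) measure \<Rightarrow> bool" where
  "has_pos_density d M \<longleftrightarrow>
     (\<exists>f :: (nat \<Rightarrow> real) \<Rightarrow> real. (\<forall>x. 0 < f x) \<and> f \<in> borel_measurable (Rn d)
        \<and> M = density (Rn d) (\<lambda>x. ennreal (f x)))"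

definition mcdf :: "nat \<Rightarrow> (nat \<Rightarrow> real) measure \<Rightarrow> (nat \<Rightarrow> real) \<Rightarrow> real" where
  "mcdf d M x = measure M {y \<in> space (Rn d). \<forall>k<d. y k \<le> x k}"

definition marg_cdf :: "(nat \<Rightarrow> real) measure \<Rightarrow> nat \<Rightarrow> real \<Rightarrow> real" where
  "marg_cdf M k t = measure M {y \<in> space M. y k \<le> t}"

definition copula :: "nat \<Rightarrow> (nat \<Rightarrow> real) measure \<Rightarrow> (nat \<Rightarrow> real) \<Rightarrow> real" where
  "copula d M u = mcdf d M (\<lambda>k. inv_into UNIV (marg_cdf M k) (u k))"

definition ac_strict_cdf :: "(real \<Rightarrow> real) \<Rightarrow> bool" where
  "ac_strict_cdf Fc \<longleftrightarrow>
     (\<exists>N. real_distribution N \<and> absolutely_continuous lborel N \<and> Fc = cdf N) \<and> strict_mono Fc"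

definition pos_density_cdf :: "(real \<Rightarrow> real) \<Rightarrow> bool" where
  "pos_density_cdf Fc \<longleftrightarrow>
     (\<exists>f :: real \<Rightarrow> real. (\<forall>t. 0 < f t) \<and> f \<in> borel_measurable borel \<and>
        real_distribution (density lborel (\<lambda>t. ennreal (f t))) \<and>
        Fc = cdf (density lborel (\<lambda>t. ennreal (f t))))"

definition Meta :: "(nat \<Rightarrow> (nat \<Rightarrow> real) measure set) \<Rightarrow> nat \<Rightarrow> (nat \<Rightarrow> real) measure set" where
  "Meta Fam d = {N. distr_on d N \<and>
     (\<exists>M\<in>Fam d. \<exists>Fs :: nat \<Rightarrow> real \<Rightarrow> real. (\<forall>k<d. ac_strict_cdf (Fs k)) \<and>
        (\<forall>x. mcdf d N x = copula d M (\<lambda>k. Fs k (x k))))}"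

definition proj :: "nat list \<Rightarrow> (nat \<Rightarrow> real) \<Rightarrow> (nat \<Rightarrow> real)" where
  "proj is x = restrict (\<lambda>k. x (is ! k)) {..<length is}"

definition valid_idx :: "nat \<Rightarrow> nat list \<Rightarrow> nat list \<Rightarrow> bool" where
  "valid_idx d is js \<longleftrightarrow> sorted_wrt (<) is \<and> sorted_wrt (<) js \<and>
     is \<noteq> [] \<and> js \<noteq> [] \<and> set is \<inter> set js = {} \<and> set is \<subseteq> {..<d} \<and> set js \<subseteq> {..<d}"

text \<open>K is a (regular) conditional distribution of X_is given X_js = z under M.\<close>
definition is_cond_law :: "(nat \<Rightarrow> real) measure \<Rightarrow> nat list \<Rightarrow> nat list
     \<Rightarrow> ((nat \<Rightarrow> real) \<Rightarrow> (nat \<Rightarrow> real) measure) \<Rightarrow> bool" where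
  "is_cond_law M is js K \<longleftrightarrow>
     (\<forall>z\<in>space (Rn (length js)). distr_on (length is) (K z)) \<and>
     (\<forall>A\<in>sets (Rn (length is)).
        (\<lambda>z. measure (K z) A) \<in> borel_measurable (Rn (length js))) \<and>
     (\<forall>A\<in>sets (Rn (length is)). \<forall>B\<in>sets (Rn (length js)).
        measure M {x \<in> space M. proj is x \<in> A \<and> proj js x \<in> B}
          = (\<integral>z. indicator B z * measure (K z) A \<partial>(distr M (Rn (length js)) (proj js))))"

definition stable_cond :: "(nat \<Rightarrow> (nat \<Rightarrow> real) measure set) \<Rightarrow> nat \<Rightarrow> bool" where
  "stable_cond Fam D \<longleftrightarrow>
     (\<forall>d\<in>{1..D}. \<forall>M\<in>Fam d. \<forall>is js. valid_idx d is js \<longrightarrow>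
        (\<exists>K. is_cond_law M is js K \<and> (\<forall>z\<in>space (Rn (length js)). K z \<in> Fam (length is))))"

end

theory Submission imports Defs begin

lemma space_Rn: "space (Rn d) = PiE {..<d} (\<lambda>_. UNIV)"
  by (simp add: Rn_def space_PiM)

lemma sets_Rn_gen: "sets (Rn d) = sigma_sets (PiE {..<d} (\<lambda>_. UNIV))
   {{f\<in>PiE {..<d} (\<lambda>_. UNIV). \<forall>i\<in>{..<d}. f i \<in> A i} | A. A \<in> Pi {..<d} (\<lambda>_. range atMost)}"
proof -
  have "sets (Rn d) = sets (PiM {..<d} (\<lambda>_. sigma (UNIV::real set) (range atMost)))"
    unfolding Rn_def by (rule sets_PiM_cong) (auto simp: borel_eq_atMost)
  also have "\<dots> = sets (sigma (PiE {..<d} (\<lambda>_. UNIV))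
     {{f\<in>PiE {..<d} (\<lambda>_. UNIV). \<forall>i\<in>j. f i \<in> A i} | A j. j \<in> {{..<d}} \<and> A \<in> Pi j (\<lambda>_. range atMost)})"
  proof (rule sets_PiM_sigma)
    fix i show "\<exists>S\<subseteq>range atMost. countable S \<and> (UNIV::real set) = \<Union>S"
      apply (rule exI[of _ "range (\<lambda>n::nat. {..real n})"])
      apply (auto simp: )
      by (metis atMost_iff real_arch_simple)
  qed auto
  also have "\<dots> = sigma_sets (PiE {..<d} (\<lambda>_. UNIV))
   {{f\<in>PiE {..<d} (\<lambda>_. UNIV). \<forall>i\<in>{..<d}. f i \<in> A i} | A. A \<in> Pi {..<d} (\<lambda>_. range atMost)}"
    by (subst sets_measure_of) auto
  finally show ?thesis .
qed

lemma mcdf_unique: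
  assumes P: "distr_on d P" and Q: "distr_on d Q" and eq: "\<And>x. mcdf d P x = mcdf d Q x"
  shows "P = Q"
proof -
  let ?\<Omega> = "PiE {..<d} (\<lambda>_. UNIV::real set)"
  let ?E = "{{f\<in>?\<Omega>. \<forall>i\<in>{..<d}. f i \<in> A i} | A. A \<in> Pi {..<d} (\<lambda>_. range atMost)}"
  interpret P: prob_space P using P by (simp add: distr_on_def)
  interpret Q: prob_space Q using Q by (simp add: distr_on_def)
  have sP: "sets P = sets (Rn d)" and sQ: "sets Q = sets (Rn d)" using P Q by (auto simp: distr_on_def)
  have spP: "space P = ?\<Omega>" using sets_eq_imp_space_eq[OF sP] by (simp add: space_Rn)
  have spQ: "space Q = ?\<Omega>" using sets_eq_imp_space_eq[OF sQ] by (simp add: space_Rn)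
  show ?thesis
  proof (rule measure_eqI_generator_eq[where \<Omega>="?\<Omega>" and E="?E" and A="\<lambda>n::nat. {f\<in>?\<Omega>. \<forall>i\<in>{..<d}. f i \<in> {..real n}}"])
    show "Int_stable ?E"
    proof (rule Int_stableI)
      fix a b assume "a \<in> ?E" "b \<in> ?E"
      then obtain A B where a: "a = {f\<in>?\<Omega>. \<forall>i\<in>{..<d}. f i \<in> A i}" "A \<in> Pi {..<d} (\<lambda>_. range atMost)"
         and b: "b = {f\<in>?\<Omega>. \<forall>i\<in>{..<d}. f i \<in> B i}" "B \<in> Pi {..<d} (\<lambda>_. range atMost)" by blast
      have "a \<inter> b = {f\<in>?\<Omega>. \<forall>i\<in>{..<d}. f i \<in> (\<lambda>i. A i \<inter> B i) i}" using a b by auto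
      moreover have "(\<lambda>i. A i \<inter> B i) \<in> Pi {..<d} (\<lambda>_. range atMost)"
      proof
        fix i assume "i \<in> {..<d}"
        then obtain x y where "A i = {..x}" "B i = {..y}" using a b by blast
        then have "A i \<inter> B i = {..min x y}" by auto
        then show "A i \<inter> B i \<in> range atMost" by blast
      qed
      ultimately show "a \<inter> b \<in> ?E"
        by (intro CollectI exI[where x="\<lambda>i. A i \<inter> B i"]) simp
    qed
    show "?E \<subseteq> Pow ?\<Omega>" by auto
    show "sets P = sigma_sets ?\<Omega> ?E" using sP sets_Rn_gen by simp
    show "sets Q = sigma_sets ?\<Omega> ?E" using sQ sets_Rn_gen by simp
    show "range (\<lambda>n::nat. {f\<in>?\<Omega>. \<forall>i\<in>{..<d}. f i \<in> {..real n}}) \<subseteq> ?E"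
    proof (rule image_subsetI)
      fix n :: nat
      show "{f\<in>?\<Omega>. \<forall>i\<in>{..<d}. f i \<in> {..real n}} \<in> ?E"
        by (intro CollectI exI[where x="\<lambda>i. {..real n}"]) auto
    qed
    show "(\<Union>n::nat. {f\<in>?\<Omega>. \<forall>i\<in>{..<d}. f i \<in> {..real n}}) = ?\<Omega>"
    proof (rule set_eqI, rule iffI)
      fix f assume f: "f \<in> ?\<Omega>"
      obtain n::nat where n: "(\<Sum>i<d. \<bar>f i\<bar>) \<le> real n" using real_arch_simple by blast
      have "f i \<le> real n" if "i < d" for i
      proof -
        have "f i \<le> \<bar>f i\<bar>" by simp
        also have "\<dots> \<le> (\<Sum>i<d. \<bar>f i\<bar>)" using that by (intro member_le_sum) auto
        finally show ?thesis using n by linarith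
      qed
      then have "\<forall>i\<in>{..<d}. f i \<le> real n" by auto
      then show "f \<in> (\<Union>n::nat. {f\<in>?\<Omega>. \<forall>i\<in>{..<d}. f i \<in> {..real n}})" using f by blast
    qed blast
    show "emeasure P (A n) \<noteq> \<infinity>" for A n by simp
    fix X assume "X \<in> ?E"
    then obtain A where X: "X = {f\<in>?\<Omega>. \<forall>i\<in>{..<d}. f i \<in> A i}" and A: "A \<in> Pi {..<d} (\<lambda>_. range atMost)" by blast
    have "\<forall>i\<in>{..<d}. \<exists>x. A i = {..x}" using A by blast
    then obtain x where x: "\<forall>i\<in>{..<d}. A i = {..x i}" by metis
    have X': "X = {y \<in> space (Rn d). \<forall>k<d. y k \<le> x k}" using x by (auto simp: X space_Rn)
    show "emeasure P X = emeasure Q X"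
      using eq[of x] by (simp add: X' mcdf_def P.emeasure_eq_measure Q.emeasure_eq_measure)
  qed
qed

lemma distr_on_space: "distr_on d P \<Longrightarrow> space P = space (Rn d)"
  unfolding distr_on_def by (metis sets_eq_imp_space_eq)

lemma distr_on_sets: "distr_on d P \<Longrightarrow> sets P = sets (Rn d)"
  by (simp add: distr_on_def)

lemma comp_meas[measurable]: "i < d \<Longrightarrow> (\<lambda>y. y i) \<in> borel_measurable (Rn d)"
proof -
  assume "i < d"
  then have "(\<lambda>y. y i) \<in> measurable (PiM {..<d} (\<lambda>_. lborel)) lborel"
    by (intro measurable_component_singleton) auto
  then show ?thesis unfolding Rn_def by simp
qed

lemma emeasure_Rn_cyl:
  assumes "i < d" "S \<in> sets borel"
  shows "emeasure (Rn d) {y \<in> space (Rn d). y i \<in> S} = 0 \<longleftrightarrow> emeasure lborel S = 0"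
proof -
  interpret ps: product_sigma_finite "\<lambda>_::nat. lborel::real measure"
    by unfold_locales
  have eqX: "{y \<in> space (Rn d). y i \<in> S} = PiE {..<d} (\<lambda>j. if j = i then S else UNIV)"
  proof (intro set_eqI iffI)
    fix y assume "y \<in> {y \<in> space (Rn d). y i \<in> S}"
    then show "y \<in> PiE {..<d} (\<lambda>j. if j = i then S else UNIV)"
      unfolding space_Rn by (simp add: PiE_iff)
  next
    fix y assume "y \<in> PiE {..<d} (\<lambda>j. if j = i then S else UNIV)"
    then show "y \<in> {y \<in> space (Rn d). y i \<in> S}"
      unfolding space_Rn using assms(1) by (simp add: PiE_iff) (metis lessThan_iff)
  qed
  have "emeasure (Rn d) {y \<in> space (Rn d). y i \<in> S} = emeasure (Rn d) (PiE {..<d} (\<lambda>j. if j = i then S else UNIV))"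
    by (simp only: eqX)
  also have "\<dots> = (\<Prod>j<d. emeasure lborel (if j = i then S else UNIV))"
    unfolding Rn_def using assms by (intro ps.emeasure_PiM) auto
  also have "\<dots> = 0 \<longleftrightarrow> emeasure lborel S = 0"
    using assms(1) by (auto simp: prod_zero_iff split: if_splits)
  finally show ?thesis .
qed

lemma posdens_zero_iff:
  assumes P: "distr_on d P" and hp: "has_pos_density d P" and i: "i < d" and S: "S \<in> sets borel"
  shows "measure P {y \<in> space P. y i \<in> S} = 0 \<longleftrightarrow> emeasure lborel S = 0"
proof -
  obtain f where f: "\<forall>x. 0 < f x" "f \<in> borel_measurable (Rn d)" and Pd: "P = density (Rn d) (\<lambda>x. ennreal (f x))"
    using hp by (auto simp: has_pos_density_def)
  interpret P: prob_space P using P by (simp add: distr_on_def)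
  let ?X = "{y \<in> space (Rn d). y i \<in> S}"
  have X: "?X \<in> sets (Rn d)" using i S by measurable
  have spP: "space P = space (Rn d)" using P by (rule distr_on_space)
  have "measure P {y \<in> space P. y i \<in> S} = 0 \<longleftrightarrow> emeasure P ?X = 0"
    by (simp add: spP P.emeasure_eq_measure)
  also have "emeasure P ?X = (\<integral>\<^sup>+ y. ennreal (f y) * indicator ?X y \<partial>Rn d)"
    unfolding Pd using X f by (simp add: emeasure_density)
  also have "\<dots> = 0 \<longleftrightarrow> (AE y in Rn d. ennreal (f y) * indicator ?X y = 0)"
    using X f(2) by (intro nn_integral_0_iff_AE borel_measurable_times_ennreal borel_measurable_indicator measurable_compose[OF f(2) measurable_ennreal]) auto
  also have "\<dots> \<longleftrightarrow> (AE y in Rn d. y \<notin> ?X)"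
  proof (rule AE_cong)
    fix y assume "y \<in> space (Rn d)"
    have "0 < f y" using f(1) by blast
    then have "ennreal (f y) \<noteq> 0" by (simp add: ennreal_eq_0_iff not_le)
    then show "(ennreal (f y) * indicator ?X y = 0) \<longleftrightarrow> y \<notin> ?X" by (simp add: indicator_def)
  qed
  also have "\<dots> \<longleftrightarrow> emeasure (Rn d) ?X = 0"
    using X by (intro AE_iff_measurable) auto
  also have "\<dots> \<longleftrightarrow> emeasure lborel S = 0" using i S by (rule emeasure_Rn_cyl)
  finally show ?thesis .
qed

lemma cdf_range:
  assumes Q: "real_distribution Q" and sm: "strict_mono (cdf Q)" and at: "\<And>x. measure Q {x} = 0"
  shows "range (cdf Q) = {0<..<1}"
proof -
  interpret Q: real_distribution Q by (rule Q)
  have cont: "isCont (cdf Q) x" for x using at Q.isCont_cdf by blast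
  show ?thesis
  proof (intro equalityI subsetI)
    fix u assume "u \<in> range (cdf Q)"
    then obtain x where u: "u = cdf Q x" by blast
    have "cdf Q (x - 1) < cdf Q x" "cdf Q x < cdf Q (x + 1)" using sm by (auto simp: strict_mono_def)
    moreover have "0 \<le> cdf Q (x - 1)" "cdf Q (x + 1) \<le> 1" using Q.cdf_nonneg Q.cdf_bounded_prob by auto
    ultimately show "u \<in> {0<..<1}" using u by auto
  next
    fix u :: real assume u: "u \<in> {0<..<1}"
    have "eventually (\<lambda>x. cdf Q x < u) at_bot"
      using u by (intro order_tendstoD(2)[OF Q.cdf_lim_at_bot]) auto
    then obtain a where a: "\<And>x. x \<le> a \<Longrightarrow> cdf Q x < u" by (auto simp: eventually_at_bot_linorder)
    have "eventually (\<lambda>x. u < cdf Q x) at_top"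
      using u by (intro order_tendstoD(1)[OF Q.cdf_lim_at_top_prob]) auto
    then obtain b where b: "\<And>x. x \<ge> b \<Longrightarrow> u < cdf Q x" by (auto simp: eventually_at_top_linorder)
    have "\<exists>x. a \<le> x \<and> x \<le> max a b \<and> cdf Q x = u"
    proof (rule IVT')
      show "cdf Q a \<le> u" using a[of a] by simp
      show "u \<le> cdf Q (max a b)" using b[of "max a b"] by simp
      show "a \<le> max a b" by simp
      show "continuous_on {a..max a b} (cdf Q)"
        using cont by (intro continuous_at_imp_continuous_on) auto
    qed
    then show "u \<in> range (cdf Q)" by (metis rangeI)
  qed
qed

lemma inv_comp:
  fixes f g :: "real \<Rightarrow> real"
  assumes f: "strict_mono f" and g: "strict_mono g" and r: "range f = range g"
  defines "G \<equiv> \<lambda>t. inv_into UNIV g (f t)"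
  shows "\<And>t. g (G t) = f t" and "\<And>t x. G t \<le> x \<longleftrightarrow> f t \<le> g x" and "strict_mono G"
    and "\<And>x. inv_into UNIV g (g x) = x"
proof -
  show 1: "g (G t) = f t" for t unfolding G_def using r by (metis f_inv_into_f rangeI)
  show 2: "G t \<le> x \<longleftrightarrow> f t \<le> g x" for t x
    using 1[of t] g by (metis strict_mono_less_eq)
  show "strict_mono G"
  proof (rule strict_monoI)
    fix s t :: real assume "s < t"
    then have "f s < f t" using f by (simp add: strict_mono_less)
    then have "g (G s) < g (G t)" using 1 by simp
    then show "G s < G t" using g by (simp add: strict_mono_less)
  qed
  show "inv_into UNIV g (g x) = x" for x
    using g by (simp add: inv_into_f_f strict_mono_imp_inj_on)
qed

lemma marg_meas: "distr_on d P \<Longrightarrow> i < d \<Longrightarrow> (\<lambda>y. y i) \<in> borel_measurable P"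
  using measurable_cong_sets[OF distr_on_sets[of d P] refl] comp_meas by blast

lemma marg_cdf_eq:
  assumes P: "distr_on d P" and i: "i < d"
  shows "marg_cdf P i = cdf (distr P borel (\<lambda>y. y i))"
    and "real_distribution (distr P borel (\<lambda>y. y i))"
proof -
  interpret P: prob_space P using P by (simp add: distr_on_def)
  have m: "(\<lambda>y. y i) \<in> borel_measurable P" using P i by (rule marg_meas)
  show "marg_cdf P i = cdf (distr P borel (\<lambda>y. y i))"
  proof
    fix t
    have "cdf (distr P borel (\<lambda>y. y i)) t = measure P ((\<lambda>y. y i) -` {..t} \<inter> space P)"
      unfolding cdf_def using m by (simp add: measure_distr)
    also have "(\<lambda>y. y i) -` {..t} \<inter> space P = {y \<in> space P. y i \<le> t}" by auto
    finally show "marg_cdf P i t = cdf (distr P borel (\<lambda>y. y i)) t" by (simp add: marg_cdf_def)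
  qed
  show "real_distribution (distr P borel (\<lambda>y. y i))"
    unfolding real_distribution_def real_distribution_axioms_def using m
    by (auto intro: P.prob_space_distr)
qed

lemma marg_measure:
  assumes P: "distr_on d P" and i: "i < d" and S: "S \<in> sets borel"
  shows "measure (distr P borel (\<lambda>y. y i)) S = measure P {y \<in> space P. y i \<in> S}"
proof -
  have m: "(\<lambda>y. y i) \<in> borel_measurable P" using P i by (rule marg_meas)
  have "measure (distr P borel (\<lambda>y. y i)) S = measure P ((\<lambda>y. y i) -` S \<inter> space P)"
    using m S by (simp add: measure_distr)
  also have "(\<lambda>y. y i) -` S \<inter> space P = {y \<in> space P. y i \<in> S}" by auto
  finally show ?thesis .
qed

lemma posdens_marg:
  assumes P: "distr_on d P" and hp: "has_pos_density d P" and i: "i < d"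
  shows "strict_mono (marg_cdf P i)" and "range (marg_cdf P i) = {0<..<1}"
proof -
  let ?Q = "distr P borel (\<lambda>y. y i)"
  have eq: "marg_cdf P i = cdf ?Q" and Q: "real_distribution ?Q" using marg_cdf_eq[OF P i] by auto
  interpret Q: real_distribution ?Q by (rule Q)
  have sm: "strict_mono (cdf ?Q)"
  proof (rule strict_monoI)
    fix a b :: real assume ab: "a < b"
    have "measure ?Q {a<..b} = measure P {y \<in> space P. y i \<in> {a<..b}}"
      using P i by (intro marg_measure) auto
    moreover have "measure P {y \<in> space P. y i \<in> {a<..b}} \<noteq> 0"
      using posdens_zero_iff[OF P hp i, of "{a<..b}"] ab by simp
    moreover have "cdf ?Q b - cdf ?Q a = measure ?Q {a<..b}" using ab by (rule Q.cdf_diff_eq)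
    ultimately show "cdf ?Q a < cdf ?Q b" using measure_nonneg[of ?Q "{a<..b}"] by linarith
  qed
  have at: "measure ?Q {x} = 0" for x
  proof -
    have "measure ?Q {x} = measure P {y \<in> space P. y i \<in> {x}}"
      using P i by (intro marg_measure) auto
    also have "\<dots> = 0" using posdens_zero_iff[OF P hp i, of "{x}"] by simp
    finally show ?thesis .
  qed
  show "strict_mono (marg_cdf P i)" using sm eq by simp
  show "range (marg_cdf P i) = {0<..<1}" using cdf_range[OF Q sm at] eq by simp
qed

lemma ac_cdf_props:
  assumes "ac_strict_cdf F"
  obtains Ns where "real_distribution Ns" "absolutely_continuous lborel Ns" "F = cdf Ns"
    "strict_mono F" "range F = {0<..<1}"
proof -
  obtain Ns where Ns: "real_distribution Ns" "absolutely_continuous lborel Ns" "F = cdf Ns"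
    and sm: "strict_mono F" using assms by (auto simp: ac_strict_cdf_def)
  interpret Ns: real_distribution Ns by (rule Ns(1))
  have at: "measure Ns {x} = 0" for x
  proof -
    have "{x} \<in> null_sets lborel" by (simp add: null_sets_def)
    then have "{x} \<in> null_sets Ns" using Ns(2) by (auto simp: absolutely_continuous_def)
    then show ?thesis by (simp add: Ns.emeasure_eq_measure null_sets_def)
  qed
  have "range F = {0<..<1}" using cdf_range[OF Ns(1) _ at] sm Ns(3) by simp
  then show ?thesis using that Ns sm by blast
qed

definition cmap :: "(nat \<Rightarrow> real \<Rightarrow> real) \<Rightarrow> nat \<Rightarrow> (nat \<Rightarrow> real) \<Rightarrow> (nat \<Rightarrow> real)" where
  "cmap \<phi> n y = restrict (\<lambda>k. \<phi> k (y k)) {..<n}"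

lemma cmap_space: "cmap \<phi> n y \<in> space (Rn n)"
  unfolding cmap_def space_Rn by (simp add: PiE_iff)

lemma cmap_apply: "k < n \<Longrightarrow> cmap \<phi> n y k = \<phi> k (y k)"
  unfolding cmap_def by simp

lemma cmap_meas:
  assumes "\<And>k. k < n \<Longrightarrow> \<phi> k \<in> borel_measurable borel"
  shows "cmap \<phi> n \<in> measurable (Rn n) (Rn n)"
proof -
  have "(\<lambda>y. restrict (\<lambda>k. \<phi> k (y k)) {..<n}) \<in> measurable (Rn n) (PiM {..<n} (\<lambda>_. lborel))"
  proof (rule measurable_restrict)
    fix k assume k: "k \<in> {..<n}"
    have "(\<lambda>y. \<phi> k (y k)) \<in> borel_measurable (Rn n)"
      using k assms[of k] comp_meas[of k n] by (intro measurable_compose[where f="\<lambda>y. y k" and g="\<phi> k"]) auto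
    then show "(\<lambda>y. \<phi> k (y k)) \<in> measurable (Rn n) lborel" by simp
  qed
  then show ?thesis unfolding cmap_def[abs_def] Rn_def by simp
qed

lemma proj_space: "proj ixs y \<in> space (Rn (length ixs))"
  unfolding proj_def space_Rn by (simp add: PiE_iff)

lemma proj_apply: "k < length ixs \<Longrightarrow> proj ixs y k = y (ixs ! k)"
  unfolding proj_def by simp

lemma proj_meas:
  assumes "set ixs \<subseteq> {..<d}"
  shows "proj ixs \<in> measurable (Rn d) (Rn (length ixs))"
proof -
  have "(\<lambda>y. restrict (\<lambda>k. y (ixs ! k)) {..<length ixs}) \<in> measurable (Rn d) (PiM {..<length ixs} (\<lambda>_. lborel))"
  proof (rule measurable_restrict)
    fix k assume k: "k \<in> {..<length ixs}"
    then have "ixs ! k < d" using assms nth_mem by fastforce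
    then have "(\<lambda>y. y (ixs ! k)) \<in> borel_measurable (Rn d)" by (rule comp_meas)
    then show "(\<lambda>y. y (ixs ! k)) \<in> measurable (Rn d) lborel" by simp
  qed
  then show ?thesis unfolding proj_def[abs_def] Rn_def by simp
qed

lemma proj_cmap:
  assumes "set ixs \<subseteq> {..<d}"
  shows "proj ixs (cmap \<phi> d y) = cmap (\<lambda>k. \<phi> (ixs ! k)) (length ixs) (proj ixs y)"
proof
  fix k show "proj ixs (cmap \<phi> d y) k = cmap (\<lambda>k. \<phi> (ixs ! k)) (length ixs) (proj ixs y) k"
  proof (cases "k < length ixs")
    case True
    then have "ixs ! k < d" using assms nth_mem by fastforce
    then show ?thesis using True by (simp add: proj_apply cmap_apply)
  next
    case False
    then show ?thesis by (simp add: proj_def cmap_def)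
  qed
qed

lemma cmap_inv:
  assumes "\<And>k t. k < n \<Longrightarrow> \<psi> k (\<phi> k t) = t" and y: "y \<in> space (Rn n)"
  shows "cmap \<psi> n (cmap \<phi> n y) = y"
proof
  fix k show "cmap \<psi> n (cmap \<phi> n y) k = y k"
  proof (cases "k < n")
    case True then show ?thesis using assms by (simp add: cmap_apply)
  next
    case False then show ?thesis using y by (simp add: cmap_def space_Rn PiE_iff extensional_def)
  qed
qed

lemma mcdf_cong: "(\<And>k. k < n \<Longrightarrow> x k = x' k) \<Longrightarrow> mcdf n P x = mcdf n P x'"
  unfolding mcdf_def by (metis (no_types, lifting))

lemma cmap_preimage_le:
  assumes "\<And>k t x. k < n \<Longrightarrow> \<phi> k t \<le> x \<longleftrightarrow> t \<le> \<psi> k x"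
  shows "cmap \<phi> n -` {y\<in>space (Rn n). \<forall>k<n. y k \<le> x k} \<inter> space (Rn n)
       = {y \<in> space (Rn n). \<forall>k<n. y k \<le> \<psi> k (x k)}"
  using assms by (auto simp: cmap_apply cmap_space)

lemma meas_sets_Rn_le: "{y\<in>space (Rn n). \<forall>k<n. y k \<le> x k} \<in> sets (Rn n)"
proof -
  have "{y\<in>space (Rn n). \<forall>k<n. y k \<le> x k} = (\<Inter>k\<in>{..<n}. {y\<in>space (Rn n). y k \<le> x k}) \<inter> space (Rn n)"
    by auto
  also have "\<dots> \<in> sets (Rn n)"
  proof (cases "n = 0")
    case True then show ?thesis by simp
  next
    case False
    have "(\<Inter>k\<in>{..<n}. {y\<in>space (Rn n). y k \<le> x k}) \<in> sets (Rn n)"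
    proof (rule sets.finite_INT)
      fix k assume "k \<in> {..<n}"
      then have "(\<lambda>y. y k) \<in> borel_measurable (Rn n)" by (intro comp_meas) auto
      then show "{y\<in>space (Rn n). y k \<le> x k} \<in> sets (Rn n)" by measurable
    qed (use False in auto)
    then show ?thesis by auto
  qed
  finally show ?thesis .
qed

lemma meas_on: "distr_on n P \<Longrightarrow> f \<in> measurable (Rn n) X \<Longrightarrow> f \<in> measurable P X"
  using measurable_cong_sets[OF distr_on_sets[of n P] refl] by blast

lemma measure_distr_on:
  assumes "distr_on n P" "f \<in> measurable (Rn n) (Rn n')" "S \<in> sets (Rn n')"
  shows "measure (distr P (Rn n') f) S = measure P (f -` S \<inter> space (Rn n))"
  using assms meas_on[OF assms(1,2)] by (simp add: measure_distr distr_on_space)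

lemma distr_on_distr:
  assumes "distr_on n P" "f \<in> measurable (Rn n) (Rn n')"
  shows "distr_on n' (distr P (Rn n') f)"
  using assms meas_on[OF assms(1,2)] unfolding distr_on_def by (auto intro: prob_space.prob_space_distr)

theorem mainTheorem3:
  fixes Fam :: "nat \<Rightarrow> (nat \<Rightarrow> real) measure set"
    and D d :: nat
    and M N :: "(nat \<Rightarrow> real) measure"
    and Fs :: "nat \<Rightarrow> real \<Rightarrow> real"
    and "is" js :: "nat list"
  assumes members: "\<forall>d'\<in>{1..D}. \<forall>M'\<in>Fam d'. distr_on d' M' \<and> has_pos_density d' M'"
    and stable: "stable_cond Fam D"
    and d: "d \<in> {1..D}"
    and M: "M \<in> Fam d"
    and Fs: "\<forall>k<d. ac_strict_cdf (Fs k) \<and> pos_density_cdf (Fs k)"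
    and N: "distr_on d N"
    and Ncdf: "\<forall>x. mcdf d N x = copula d M (\<lambda>k. Fs k (x k))"
    and idx: "valid_idx d is js"
  shows "\<exists>K. is_cond_law N is js K \<and>
           (\<forall>z\<in>space (Rn (length js)). K z \<in> Meta Fam (length is))"
proof -
  define l where "l = length is"
  define m where "m = length js"
  have isd: "set is \<subseteq> {..<d}" and jsd: "set js \<subseteq> {..<d}" using idx by (auto simp: valid_idx_def)
  have l1: "1 \<le> l" using idx unfolding valid_idx_def l_def by (simp add: Suc_le_eq)
  have "distinct is" using idx by (auto simp: valid_idx_def strict_sorted_iff)
  then have "l = card (set is)" by (simp add: l_def distinct_card)
  also have "\<dots> \<le> card {..<d}" using isd by (intro card_mono) auto
  finally have ld: "l \<le> d" by simp
  have lD: "l \<in> {1..D}" using l1 ld d by auto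
  have isk: "is ! k < d" if "k < l" for k using isd that nth_mem unfolding l_def by fastforce
  have MM: "distr_on d M" "has_pos_density d M" using members d M by auto
  interpret PM: prob_space M using MM(1) by (simp add: distr_on_def)
  define Psi where "Psi k = marg_cdf M k" for k
  have Psi: "strict_mono (Psi k)" "range (Psi k) = {0<..<1}" if "k < d" for k
    using posdens_marg[OF MM that] by (auto simp: Psi_def)
  have "\<forall>k<d. \<exists>Ns. real_distribution Ns \<and> absolutely_continuous lborel Ns \<and> Fs k = cdf Ns \<and>
     strict_mono (Fs k) \<and> range (Fs k) = {0<..<1}"
    using Fs ac_cdf_props by metis
  then obtain Ns where Ns: "\<And>k. k < d \<Longrightarrow> real_distribution (Ns k) \<and> absolutely_continuous lborel (Ns k) \<and> Fs k = cdf (Ns k) \<and>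
     strict_mono (Fs k) \<and> range (Fs k) = {0<..<1}" by metis
  define G where "G k t = inv_into UNIV (Fs k) (Psi k t)" for k t
  define Hh where "Hh k x = inv_into UNIV (Psi k) (Fs k x)" for k x
  have G1: "Fs k (G k t) = Psi k t" "G k t \<le> x \<longleftrightarrow> Psi k t \<le> Fs k x" "strict_mono (G k)" if "k < d" for k t x
    using inv_comp[of "Psi k" "Fs k"] Psi[OF that] Ns[OF that] unfolding G_def by auto
  have H1: "Psi k (Hh k x) = Fs k x" "strict_mono (Hh k)" "inv_into UNIV (Psi k) (Psi k t) = t" if "k < d" for k t x
    using inv_comp[of "Fs k" "Psi k"] Psi[OF that] Ns[OF that] unfolding Hh_def by auto
  have GH: "G k t \<le> x \<longleftrightarrow> t \<le> Hh k x" if "k < d" for k t x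
    using G1(2)[OF that] H1(1)[OF that] Psi(1)[OF that] by (metis strict_mono_less_eq)
  have HG: "Hh k (G k t) = t" if "k < d" for k t
  proof -
    have "Psi k (Hh k (G k t)) = Psi k t" using H1(1)[OF that] G1(1)[OF that] by simp
    then show ?thesis using Psi(1)[OF that] by (metis strict_mono_eq)
  qed
  have Gm: "G k \<in> borel_measurable borel" "Hh k \<in> borel_measurable borel" if "k < d" for k
    using G1(3)[OF that] H1(2)[OF that] by (auto intro!: borel_measurable_mono strict_mono_mono)
  define T where "T = cmap G d"
  define Gis where "Gis = cmap (\<lambda>k. G (is ! k)) l"
  define Gjs where "Gjs = cmap (\<lambda>k. G (js ! k)) m"
  define Hjs where "Hjs = cmap (\<lambda>k. Hh (js ! k)) m"
  have jsk: "js ! k < d" if "k < m" for k using jsd that nth_mem unfolding m_def by fastforce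
  have Tm: "T \<in> measurable (Rn d) (Rn d)" unfolding T_def using Gm by (intro cmap_meas) auto
  have Gism: "Gis \<in> measurable (Rn l) (Rn l)" unfolding Gis_def using Gm isk by (intro cmap_meas) auto
  have Gjsm: "Gjs \<in> measurable (Rn m) (Rn m)" unfolding Gjs_def using Gm jsk by (intro cmap_meas) auto
  have Hjsm: "Hjs \<in> measurable (Rn m) (Rn m)" unfolding Hjs_def using Gm jsk by (intro cmap_meas) auto
  have projis: "proj is \<in> measurable (Rn d) (Rn l)" unfolding l_def using isd by (rule proj_meas)
  have projjs: "proj js \<in> measurable (Rn d) (Rn m)" unfolding m_def using jsd by (rule proj_meas)
  have pisT: "proj is (T y) = Gis (proj is y)" for y unfolding T_def Gis_def l_def using isd by (rule proj_cmap)
  have pjsT: "proj js (T y) = Gjs (proj js y)" for y unfolding T_def Gjs_def m_def using jsd by (rule proj_cmap)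
  have HjsGjs: "Hjs (Gjs w) = w" if "w \<in> space (Rn m)" for w
    unfolding Hjs_def Gjs_def using HG jsk that by (intro cmap_inv) auto
  have spM: "space M = space (Rn d)" using MM(1) by (rule distr_on_space)
  have NT: "N = distr M (Rn d) T"
  proof (rule mcdf_unique[OF N distr_on_distr[OF MM(1) Tm]])
    fix x
    have "mcdf d (distr M (Rn d) T) x = measure M (T -` {y\<in>space (Rn d). \<forall>k<d. y k \<le> x k} \<inter> space (Rn d))"
      unfolding mcdf_def using MM(1) Tm meas_sets_Rn_le by (rule measure_distr_on)
    also have "T -` {y\<in>space (Rn d). \<forall>k<d. y k \<le> x k} \<inter> space (Rn d) = {y\<in>space (Rn d). \<forall>k<d. y k \<le> Hh k (x k)}"
      unfolding T_def using GH by (intro cmap_preimage_le) auto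
    also have "measure M \<dots> = copula d M (\<lambda>k. Fs k (x k))"
      by (simp add: copula_def mcdf_def Hh_def Psi_def)
    finally show "mcdf d N x = mcdf d (distr M (Rn d) T) x" using Ncdf by simp
  qed
  have "\<exists>K. is_cond_law M is js K \<and> (\<forall>z\<in>space (Rn (length js)). K z \<in> Fam (length is))"
    using stable d M idx unfolding stable_cond_def by blast
  then obtain KM where KMlaw: "is_cond_law M is js KM" and KMF: "\<And>z. z \<in> space (Rn m) \<Longrightarrow> KM z \<in> Fam l"
    unfolding m_def l_def by blast
  have KMd: "distr_on l (KM w)" "has_pos_density l (KM w)" if "w \<in> space (Rn m)" for w
    using members lD KMF[OF that] by auto
  have Hjs_sp: "Hjs z \<in> space (Rn m)" for z unfolding Hjs_def by (rule cmap_space)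
  define K where "K z = distr (KM (Hjs z)) (Rn l) Gis" for z
  have Kd: "distr_on l (K z)" for z unfolding K_def using KMd(1)[OF Hjs_sp] Gism by (rule distr_on_distr)
  have Kmeas: "measure (K z) A = measure (KM (Hjs z)) (Gis -` A \<inter> space (Rn l))" if "A \<in> sets (Rn l)" for z A
    unfolding K_def using KMd(1)[OF Hjs_sp] Gism that by (rule measure_distr_on)
  have KMm: "(\<lambda>w. measure (KM w) A) \<in> borel_measurable (Rn m)" if "A \<in> sets (Rn l)" for A
    using KMlaw that unfolding is_cond_law_def l_def m_def by blast
  have Kzm: "(\<lambda>z. measure (K z) A) \<in> borel_measurable (Rn m)" if A: "A \<in> sets (Rn l)" for A
  proof -
    have A': "Gis -` A \<inter> space (Rn l) \<in> sets (Rn l)" using Gism A by (rule measurable_sets)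
    have "(\<lambda>z. measure (KM (Hjs z)) (Gis -` A \<inter> space (Rn l))) \<in> borel_measurable (Rn m)"
      using measurable_compose[OF Hjsm KMm[OF A']] by simp
    then show ?thesis using Kmeas[OF A] by simp
  qed
  have law: "is_cond_law N is js K"
    unfolding is_cond_law_def
  proof (intro conjI ballI)
    fix z show "distr_on (length is) (K z)" using Kd l_def by simp
  next
    fix A assume "A \<in> sets (Rn (length is))"
    then show "(\<lambda>z. measure (K z) A) \<in> borel_measurable (Rn (length js))" using Kzm l_def m_def by simp
  next
    fix A B assume A: "A \<in> sets (Rn (length is))" and B: "B \<in> sets (Rn (length js))"
    then have A: "A \<in> sets (Rn l)" and B: "B \<in> sets (Rn m)" by (auto simp: l_def m_def)
    define A' where "A' = Gis -` A \<inter> space (Rn l)"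
    define B' where "B' = Gjs -` B \<inter> space (Rn m)"
    have A': "A' \<in> sets (Rn l)" unfolding A'_def using Gism A by (rule measurable_sets)
    have B': "B' \<in> sets (Rn m)" unfolding B'_def using Gjsm B by (rule measurable_sets)
    have spN: "space N = space (Rn d)" using N by (rule distr_on_space)
    have S: "{x \<in> space (Rn d). proj is x \<in> A \<and> proj js x \<in> B} \<in> sets (Rn d)"
    proof -
      have "{x \<in> space (Rn d). proj is x \<in> A \<and> proj js x \<in> B} = (proj is -` A \<inter> space (Rn d)) \<inter> (proj js -` B \<inter> space (Rn d))"
        by auto
      also have "\<dots> \<in> sets (Rn d)" using measurable_sets[OF projis A] measurable_sets[OF projjs B] by auto
      finally show ?thesis .
    qed
    have "measure N {x \<in> space N. proj is x \<in> A \<and> proj js x \<in> B}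
        = measure N {x \<in> space (Rn d). proj is x \<in> A \<and> proj js x \<in> B}"
      by (simp only: spN)
    also have "\<dots> = measure (distr M (Rn d) T) {x \<in> space (Rn d). proj is x \<in> A \<and> proj js x \<in> B}"
      by (simp only: NT)
    also have "\<dots> = measure M (T -` {x \<in> space (Rn d). proj is x \<in> A \<and> proj js x \<in> B} \<inter> space (Rn d))"
      using MM(1) Tm S by (rule measure_distr_on)
    also have "T -` {x \<in> space (Rn d). proj is x \<in> A \<and> proj js x \<in> B} \<inter> space (Rn d)
        = {x \<in> space M. proj is x \<in> A' \<and> proj js x \<in> B'}"
      unfolding spM A'_def B'_def using pisT pjsT proj_space[of "is"] proj_space[of js]
      by (auto simp: T_def cmap_space l_def m_def)
    also have "measure M \<dots> = (\<integral>w. indicator B' w * measure (KM w) A' \<partial>(distr M (Rn m) (proj js)))"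
      using KMlaw A' B' unfolding is_cond_law_def l_def m_def by blast
    also have "\<dots> = (\<integral>w. indicator B (Gjs w) * measure (K (Gjs w)) A \<partial>(distr M (Rn m) (proj js)))"
    proof (rule Bochner_Integration.integral_cong[OF refl])
      fix w assume "w \<in> space (distr M (Rn m) (proj js))"
      then have w: "w \<in> space (Rn m)" by simp
      have "indicator B' w = (indicator B (Gjs w) :: real)" using w by (simp add: B'_def indicator_def)
      moreover have "measure (K (Gjs w)) A = measure (KM w) A'" using Kmeas[OF A] HjsGjs[OF w] by (simp add: A'_def)
      ultimately show "indicator B' w * measure (KM w) A' = indicator B (Gjs w) * measure (K (Gjs w)) A" by simp
    qed
    also have "\<dots> = (\<integral>z. indicator B z * measure (K z) A \<partial>(distr (distr M (Rn m) (proj js)) (Rn m) Gjs))"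
      using Gjsm Kzm[OF A] B by (intro integral_distr[symmetric]) auto
    also have "distr (distr M (Rn m) (proj js)) (Rn m) Gjs = distr N (Rn (length js)) (proj js)"
    proof -
      have pjM: "proj js \<in> measurable M (Rn m)" using meas_on[OF MM(1) projjs] .
      have TM: "T \<in> measurable M (Rn d)" using meas_on[OF MM(1) Tm] .
      have "distr (distr M (Rn m) (proj js)) (Rn m) Gjs = distr M (Rn m) (Gjs \<circ> proj js)"
        using Gjsm pjM by (rule distr_distr)
      also have "\<dots> = distr M (Rn m) (proj js \<circ> T)"
        by (rule distr_cong) (auto simp: pjsT)
      also have "\<dots> = distr (distr M (Rn d) T) (Rn m) (proj js)"
        using projjs TM by (rule distr_distr[symmetric])
      finally show ?thesis using NT m_def by simp
    qed
    finally show "measure N {x \<in> space N. proj is x \<in> A \<and> proj js x \<in> B}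
      = (\<integral>z. indicator B z * measure (K z) A \<partial>(distr N (Rn (length js)) (proj js)))" .
  qed
  have meta: "K z \<in> Meta Fam l" if z: "z \<in> space (Rn m)" for z
  proof -
    define w where "w = Hjs z"
    have w: "w \<in> space (Rn m)" using Hjs_sp w_def by simp
    have M'd: "distr_on l (KM w)" "has_pos_density l (KM w)" using KMd[OF w] by auto
    have M'F: "KM w \<in> Fam l" using KMF[OF w] .
    have spM': "space (KM w) = space (Rn l)" using M'd(1) by (rule distr_on_space)
    have spK: "space (K z) = space (Rn l)" using Kd by (rule distr_on_space)
    have Kmeas': "measure (K z) A = measure (KM w) (Gis -` A \<inter> space (Rn l))" if "A \<in> sets (Rn l)" for A
      using Kmeas[OF that] w_def by simp
    have mc: "marg_cdf (K z) k t = marg_cdf (KM w) k (Hh (is!k) t)" if k: "k < l" for k t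
    proof -
      have Ssets: "{y \<in> space (Rn l). y k \<in> {..t}} \<in> sets (Rn l)"
      proof -
        have "(\<lambda>y. y k) \<in> borel_measurable (Rn l)" using k by (rule comp_meas)
        from measurable_sets[OF this, of "{..t}"] show ?thesis by (simp add: vimage_def Int_def conj_commute)
      qed
      have "marg_cdf (K z) k t = measure (K z) {y \<in> space (Rn l). y k \<in> {..t}}" by (simp add: marg_cdf_def spK)
      also have "\<dots> = measure (KM w) (Gis -` {y \<in> space (Rn l). y k \<in> {..t}} \<inter> space (Rn l))"
        using Kmeas'[OF Ssets] .
      also have "Gis -` {y \<in> space (Rn l). y k \<in> {..t}} \<inter> space (Rn l) = {y \<in> space (KM w). y k \<le> Hh (is!k) t}"
        using k GH[OF isk[OF k]] by (auto simp: Gis_def cmap_apply cmap_space spM')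
      finally show ?thesis by (simp add: marg_cdf_def)
    qed
    have ac: "ac_strict_cdf (marg_cdf (K z) k)" if k: "k < l" for k
    proof -
      let ?Q = "distr (K z) borel (\<lambda>y. y k)"
      let ?i = "is ! k"
      have i: "?i < d" using isk k .
      have Qeq: "marg_cdf (K z) k = cdf ?Q" and Q: "real_distribution ?Q" using marg_cdf_eq[OF Kd k] by auto
      interpret Q: real_distribution ?Q by (rule Q)
      have sm: "strict_mono (marg_cdf (K z) k)"
      proof (rule strict_monoI)
        fix a b :: real assume "a < b"
        then have "Hh ?i a < Hh ?i b" using H1(2)[OF i] by (simp add: strict_mono_less)
        then have "marg_cdf (KM w) k (Hh ?i a) < marg_cdf (KM w) k (Hh ?i b)"
          using posdens_marg(1)[OF M'd k] by (simp add: strict_mono_less)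
        then show "marg_cdf (K z) k a < marg_cdf (K z) k b" using mc[OF k] by simp
      qed
      have acQ: "absolutely_continuous lborel ?Q"
        unfolding absolutely_continuous_def
      proof
        fix S :: "real set" assume S: "S \<in> null_sets lborel"
        then have Sb: "S \<in> sets borel" by (auto simp: null_sets_def)
        have GS: "G ?i -` S \<in> sets borel" using measurable_sets[OF Gm(1)[OF i] Sb] by simp
        have fm: "(\<lambda>y. G ?i (y ?i)) \<in> borel_measurable M"
          using meas_on[OF MM(1) measurable_compose[OF comp_meas[OF i] Gm(1)[OF i]]] .
        have Nsi: "real_distribution (Ns ?i)" "absolutely_continuous lborel (Ns ?i)" "Fs ?i = cdf (Ns ?i)"
          using Ns[OF i] by auto
        have DM: "distr M borel (\<lambda>y. G ?i (y ?i)) = Ns ?i"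
        proof (rule cdf_unique)
          show "real_distribution (distr M borel (\<lambda>y. G ?i (y ?i)))"
            unfolding real_distribution_def real_distribution_axioms_def using fm
            by (auto intro: PM.prob_space_distr)
          show "real_distribution (Ns ?i)" by (rule Nsi(1))
          show "cdf (distr M borel (\<lambda>y. G ?i (y ?i))) = cdf (Ns ?i)"
          proof
            fix x
            have "cdf (distr M borel (\<lambda>y. G ?i (y ?i))) x = measure M ((\<lambda>y. G ?i (y ?i)) -` {..x} \<inter> space M)"
              unfolding cdf_def using fm by (simp add: measure_distr)
            also have "(\<lambda>y. G ?i (y ?i)) -` {..x} \<inter> space M = {y \<in> space M. y ?i \<le> Hh ?i x}"
              using GH[OF i] by auto
            also have "measure M \<dots> = Psi ?i (Hh ?i x)" by (simp add: Psi_def marg_cdf_def)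
            also have "\<dots> = Fs ?i x" by (rule H1(1)[OF i])
            finally show "cdf (distr M borel (\<lambda>y. G ?i (y ?i))) x = cdf (Ns ?i) x" using Nsi(3) by simp
          qed
        qed
        have "S \<in> null_sets (Ns ?i)" using S Nsi(2) by (auto simp: absolutely_continuous_def)
        then have "measure (Ns ?i) S = 0" by (simp add: measure_def null_sets_def)
        then have "measure (distr M borel (\<lambda>y. G ?i (y ?i))) S = 0" using DM by simp
        moreover have "measure (distr M borel (\<lambda>y. G ?i (y ?i))) S = measure M ((\<lambda>y. G ?i (y ?i)) -` S \<inter> space M)"
          using fm Sb by (simp add: measure_distr)
        moreover have "(\<lambda>y. G ?i (y ?i)) -` S \<inter> space M = {y \<in> space M. y ?i \<in> G ?i -` S}" by auto
        ultimately have "measure M {y \<in> space M. y ?i \<in> G ?i -` S} = 0" by simp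
        then have "emeasure lborel (G ?i -` S) = 0" using posdens_zero_iff[OF MM i GS] by simp
        then have M'0: "measure (KM w) {y \<in> space (KM w). y k \<in> G ?i -` S} = 0"
          using posdens_zero_iff[OF M'd k GS] by simp
        have Ssets: "{y \<in> space (Rn l). y k \<in> S} \<in> sets (Rn l)"
        proof -
          have "(\<lambda>y. y k) \<in> borel_measurable (Rn l)" using k by (rule comp_meas)
          from measurable_sets[OF this Sb] show ?thesis by (simp add: vimage_def Int_def conj_commute)
        qed
        have "measure ?Q S = measure (K z) {y \<in> space (K z). y k \<in> S}"
          using Kd k Sb by (rule marg_measure)
        also have "\<dots> = measure (KM w) (Gis -` {y \<in> space (Rn l). y k \<in> S} \<inter> space (Rn l))"
          using Kmeas'[OF Ssets] spK by simp
        also have "Gis -` {y \<in> space (Rn l). y k \<in> S} \<inter> space (Rn l) = {y \<in> space (KM w). y k \<in> G ?i -` S}"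
          using k by (auto simp: Gis_def cmap_apply cmap_space spM')
        finally have "measure ?Q S = 0" using M'0 by simp
        then show "S \<in> null_sets ?Q" using Sb by (simp add: Q.emeasure_eq_measure null_sets_def)
      qed
      show ?thesis unfolding ac_strict_cdf_def using Q acQ Qeq sm by blast
    qed
    have mceq: "mcdf l (K z) x = copula l (KM w) (\<lambda>k. marg_cdf (K z) k (x k))" for x
    proof -
      have "mcdf l (K z) x = measure (KM w) (Gis -` {y \<in> space (Rn l). \<forall>k<l. y k \<le> x k} \<inter> space (Rn l))"
        unfolding mcdf_def using Kmeas'[OF meas_sets_Rn_le] .
      also have "Gis -` {y \<in> space (Rn l). \<forall>k<l. y k \<le> x k} \<inter> space (Rn l) = {y \<in> space (Rn l). \<forall>k<l. y k \<le> Hh (is!k) (x k)}"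
        unfolding Gis_def using GH isk by (intro cmap_preimage_le) auto
      also have "measure (KM w) \<dots> = mcdf l (KM w) (\<lambda>k. Hh (is!k) (x k))" by (simp add: mcdf_def)
      also have "\<dots> = copula l (KM w) (\<lambda>k. marg_cdf (K z) k (x k))"
        unfolding copula_def
      proof (rule mcdf_cong)
        fix k assume k: "k < l"
        have "inj (marg_cdf (KM w) k)" using posdens_marg(1)[OF M'd k] by (rule strict_mono_imp_inj_on)
        then show "Hh (is!k) (x k) = inv_into UNIV (marg_cdf (KM w) k) (marg_cdf (K z) k (x k))"
          using mc[OF k] by (simp add: inv_into_f_f)
      qed
      finally show ?thesis .
    qed
    show ?thesis unfolding Meta_def
    proof (intro CollectI conjI bexI[OF _ M'F] exI[where x="\<lambda>k. marg_cdf (K z) k"])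
      show "distr_on l (K z)" by (rule Kd)
      show "\<forall>k<l. ac_strict_cdf (marg_cdf (K z) k)" using ac by blast
      show "\<forall>x. mcdf l (K z) x = copula l (KM w) (\<lambda>k. marg_cdf (K z) k (x k))" using mceq by blast
    qed
  qed
  show ?thesis using law meta unfolding l_def m_def by blast
qed

end
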